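(* Let $\mathbf A,\mathbf B\in\mathbb C^{n\times n}$, $k=\operatorname{Ind}\mathbf A$, $r=\operatorname{rank}\mathbf A^{k}$, and for $l\ge 0$ let $\hat{\mathbf B}^{(l)}=\mathbf A^{l}\mathbf B=(\hat b^{(l)}_{ij})$ with $j$-th column $\hat{\mathbf b}^{(l)}_{.j}$ (so $\hat{\mathbf B}^{(0)}=\mathbf B=(b_{ij})$). Let \[\mathbf X(t)=\mathbf A^{D}\mathbf B+\sum_{s=1}^{k}\frac{(-1)^{s-1}}{s!}\left(\mathbf A^{s-1}\mathbf B-\mathbf A^{D}\mathbf A^{s}\mathbf B\right)t^{s}\] (the partial solution of $\mathbf X'+\mathbf A\mathbf X=\mathbf B$). Writing $\Delta=\sum_{\beta\in J_{r,n}}\left|(\mathbf A^{k+1})^{\beta}_{\beta}\right|$ and $N_{ij}(l)=\sum_{\beta\in J_{r,n}\{i\}}\left|\left(\mathbf A^{k+1}_{.i}(\hat{\mathbf b}^{(l)}_{.j})\right)^{\beta}_{\beta}\right|$, the entries of $\mathbf X(t)=(x_{ij})$ are, for all $i,j=1,\dots,n$, \[x_{ij}=\frac{N_{ij}(k)}{\Delta}+\sum_{s=1}^{k}\frac{(-1)^{s-1}}{s!}\left(\hat b^{(s-1)}_{ij}-\frac{N_{ij}(k+s)}{\Delta}\right)t^{s}.\]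
   Context: $\operatorname{Ind}\mathbf A$ is the smallest nonnegative $k$ with $\operatorname{rank}\mathbf A^{k+1}=\operatorname{rank}\mathbf A^{k}$; the Drazin inverse $\mathbf A^{D}$ is the unique $\mathbf X$ with $\mathbf A^{k+1}\mathbf X=\mathbf A^{k}$, $\mathbf X\mathbf A\mathbf X=\mathbf X$, $\mathbf A\mathbf X=\mathbf X\mathbf A$. $\mathbf M_{.i}(\mathbf c)$ denotes $\mathbf M$ with its $i$-th column replaced by $\mathbf c$. $J_{r,n}$ is the set of strictly increasing sequences of $r$ elements of $\{1,\dots,n\}$, $J_{r,n}\{i\}=\{\beta\in J_{r,n}:i\in\beta\}$, $\mathbf M^{\beta}_{\beta}$ is the principal submatrix indexed by $\beta$, $|\cdot|$ is the determinant. *)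

theory Defs
  imports "Jordan_Normal_Form.DL_Rank" "Jordan_Normal_Form.DL_Submatrix" "Jordan_Normal_Form.Determinant"
begin

text \<open>Matrices are Jordan_Normal_Form matrices; indices are 0-based (0..n-1 instead of 1..n).\<close>

definition mat_rank :: "complex mat \<Rightarrow> nat" where
  "mat_rank A = vec_space.rank (dim_row A) A"

definition mat_ind :: "complex mat \<Rightarrow> nat" where
  "mat_ind A = (LEAST k. mat_rank (A ^\<^sub>m (k+1)) = mat_rank (A ^\<^sub>m k))"

definition is_drazin_inverse :: "complex mat \<Rightarrow> complex mat \<Rightarrow> bool" where
  "is_drazin_inverse A X \<longleftrightarrow>
     X \<in> carrier_mat (dim_row A) (dim_row A) \<and>
     A ^\<^sub>m (mat_ind A + 1) * X = A ^\<^sub>m (mat_ind A) \<and>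
     X * A * X = X \<and> A * X = X * A"

definition mat_sum :: "nat \<Rightarrow> ('b \<Rightarrow> 'a::comm_monoid_add mat) \<Rightarrow> 'b set \<Rightarrow> 'a mat" where
  "mat_sum n f S = mat n n (\<lambda>(a,b). \<Sum>s\<in>S. f s $$ (a,b))"

text \<open>J_{r,n}: r-element subsets of {0..<n} (= strictly increasing sequences).\<close>
definition Jrn :: "nat \<Rightarrow> nat \<Rightarrow> nat set set" where
  "Jrn r n = {\<beta>. \<beta> \<subseteq> {..<n} \<and> card \<beta> = r}"

definition principal_sub :: "'a mat \<Rightarrow> nat set \<Rightarrow> 'a mat" where
  "principal_sub M \<beta> = submatrix M \<beta> \<beta>"

end

theory Submission
  imports Defs "HOL-Combinatorics.Permutations" "Jordan_Normal_Form.Matrix_Kernel"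
    "Jordan_Normal_Form.Jordan_Normal_Form_Uniqueness" "Jordan_Normal_Form.Jordan_Normal_Form_Existence"
begin

lemma bij_pick:
  assumes "finite (U::nat set)"
  shows "bij_betw (pick U) {..<card U} U"
proof (rule bij_betw_imageI)
  show "inj_on (pick U) {..<card U}"
  proof (rule inj_onI)
    fix a b assume a: "a \<in> {..<card U}" and b: "b \<in> {..<card U}" and e: "pick U a = pick U b"
    show "a = b"
    proof (rule ccontr)
      assume "a \<noteq> b"
      hence "a < b \<or> b < a" by arith
      moreover have "a < b \<Longrightarrow> pick U a < pick U b" using b by (intro pick_mono_le) simp_all
      moreover have "b < a \<Longrightarrow> pick U b < pick U a" using a by (intro pick_mono_le) simp_all
      ultimately show False using e by auto
    qed
  qed
  show "pick U ` {..<card U} = U"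
  proof
    show "pick U ` {..<card U} \<subseteq> U"
    proof
      fix y assume "y \<in> pick U ` {..<card U}"
      then obtain a where a: "a < card U" "y = pick U a" by auto
      thus "y \<in> U" using pick_in_set_le[OF a(1)] by simp
    qed
    show "U \<subseteq> pick U ` {..<card U}"
    proof
      fix x assume x: "x \<in> U"
      have "{a\<in>U. a < x} \<subset> U" using x by blast
      hence "card {a\<in>U. a < x} < card U" using assms by (simp add: psubset_card_mono)
      hence "card {a\<in>U. a < x} \<in> {..<card U}" by simp
      hence "pick U (card {a\<in>U. a < x}) \<in> pick U ` {..<card U}" by (rule imageI)
      thus "x \<in> pick U ` {..<card U}" using pick_card_in_set[OF x] by simp
    qed
  qed
qed

definition pdet :: "'a::comm_ring_1 mat \<Rightarrow> nat set \<Rightarrow> 'a" where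
  "pdet P U = (\<Sum>\<pi>\<in>{\<pi>. \<pi> permutes U}. signof \<pi> * (\<Prod>a\<in>U. P $$ (a, \<pi> a)))"

lemma det_principal_sub:
  assumes P: "P \<in> carrier_mat n n" and U: "U \<subseteq> {..<n}"
  shows "det (principal_sub P U) = pdet P U"
proof -
  have fU: "finite U" using U finite_subset by blast
  define m where "m = card U"
  define h where "h = pick U"
  have cardU: "card {i. i < n \<and> i \<in> U} = m" unfolding m_def using U
    by (metis (no_types, lifting) Collect_cong Collect_mem_eq lessThan_iff subsetD)
  have bh: "bij_betw h {0..<m} U" using bij_pick[OF fU] unfolding h_def m_def by (simp add: atLeast0LessThan)
  have sub: "principal_sub P U \<in> carrier_mat m m"
    unfolding principal_sub_def using P cardU by (auto simp: dim_submatrix)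
  have idx: "principal_sub P U $$ (a,b) = P $$ (h a, h b)" if "a < m" "b < m" for a b
    unfolding principal_sub_def h_def using that P cardU by (subst submatrix_index) auto
  have "det (principal_sub P U) = (\<Sum>\<sigma>\<in>{\<sigma>. \<sigma> permutes {0..<m}}. signof \<sigma> * (\<Prod>a = 0..<m. P $$ (h a, h (\<sigma> a))))"
    unfolding det_def' [OF sub]
    by (intro sum.cong refl arg_cong2[where f="(*)"] prod.cong) (auto simp: idx permutes_in_image)
  also have "\<dots> = pdet P U"
  proof -
    let ?H = "map_permutation {0..<m} h"
    have inj: "inj_on h {0..<m}" using bh by (rule bij_betw_imp_inj_on)
    let ?g = "\<lambda>\<pi>. signof \<pi> * (\<Prod>a\<in>U. P $$ (a, \<pi> a))"
    have bij: "bij_betw ?H {\<sigma>. \<sigma> permutes {0..<m}} {\<pi>. \<pi> permutes U}"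
    proof (rule bij_betwI[where g = "map_permutation U (inv_into {0..<m} h)"])
      show "?H \<in> {\<sigma>. \<sigma> permutes {0..<m}} \<rightarrow> {\<pi>. \<pi> permutes U}"
        by (intro Pi_I) (simp add: map_permutation_permutes[OF bh])
      show "map_permutation U (inv_into {0..<m} h) \<in> {\<pi>. \<pi> permutes U} \<rightarrow> {\<sigma>. \<sigma> permutes {0..<m}}"
        by (intro Pi_I) (simp add: map_permutation_permutes[OF bij_betw_inv_into[OF bh]])
      show "map_permutation U (inv_into {0..<m} h) (?H x) = x"
        if "x \<in> {\<sigma>. \<sigma> permutes {0..<m}}" for x
        by (rule map_permutation_compose_inv[OF bh]) (use that in \<open>simp_all add: inv_into_f_f[OF inj]\<close>)
      show "?H (map_permutation U (inv_into {0..<m} h) y) = y"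
        if "y \<in> {\<pi>. \<pi> permutes U}" for y
        by (rule map_permutation_compose_inv[OF bij_betw_inv_into[OF bh]]) (use that in \<open>simp_all add: bij_betw_inv_into_right[OF bh]\<close>)
    qed
    have eq: "signof \<sigma> * (\<Prod>a = 0..<m. P $$ (h a, h (\<sigma> a))) = ?g (?H \<sigma>)"
      if s: "\<sigma> \<in> {\<sigma>. \<sigma> permutes {0..<m}}" for \<sigma>
    proof -
      have "sign (?H \<sigma>) = sign \<sigma>"
        using sign_map_permutation[OF inj _ finite_atLeastLessThan] s by simp
      moreover have "(\<Prod>a\<in>U. P $$ (a, ?H \<sigma> a)) = (\<Prod>a = 0..<m. P $$ (h a, h (\<sigma> a)))"
      proof -
        have "(\<Prod>a\<in>U. P $$ (a, ?H \<sigma> a)) = (\<Prod>a \<in> {0..<m}. P $$ (h a, ?H \<sigma> (h a)))"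
          by (rule sym, rule prod.reindex_bij_betw[OF bh])
        also have "\<dots> = (\<Prod>a = 0..<m. P $$ (h a, h (\<sigma> a)))"
          by (intro prod.cong refl) (simp add: map_permutation_apply[OF inj])
        finally show ?thesis .
      qed
      ultimately show ?thesis by simp
    qed
    have "(\<Sum>\<sigma>\<in>{\<sigma>. \<sigma> permutes {0..<m}}. signof \<sigma> * (\<Prod>a = 0..<m. P $$ (h a, h (\<sigma> a))))
        = (\<Sum>\<sigma>\<in>{\<sigma>. \<sigma> permutes {0..<m}}. ?g (?H \<sigma>))"
      by (rule sum.cong[OF refl eq])
    also have "\<dots> = (\<Sum>\<pi>\<in>{\<pi>. \<pi> permutes U}. ?g \<pi>)"
      by (rule sum.reindex_bij_betw[OF bij])
    finally show ?thesis unfolding pdet_def .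
  qed
  finally show ?thesis .
qed

lemma const_poly_prod: "(\<Prod>a\<in>A. [:f a:]) = [:\<Prod>a\<in>A. f a:]"
  by (induct A rule: infinite_finite_induct) (simp_all add: mult_pCons_left mult.commute)

lemma permutes_minus_iff:
  assumes "S \<subseteq> A"
  shows "\<pi> permutes (A - S) \<longleftrightarrow> \<pi> permutes A \<and> (\<forall>a\<in>S. \<pi> a = a)"
proof
  assume p: "\<pi> permutes (A - S)"
  have "\<pi> permutes A" using permutes_subset[OF p] by blast
  moreover have "\<forall>a\<in>S. \<pi> a = a" using p by (simp add: permutes_not_in)
  ultimately show "\<pi> permutes A \<and> (\<forall>a\<in>S. \<pi> a = a)" by blast
next
  assume p: "\<pi> permutes A \<and> (\<forall>a\<in>S. \<pi> a = a)"
  show "\<pi> permutes (A - S)" unfolding permutes_def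
  proof (intro conjI allI impI)
    fix x assume "x \<notin> A - S" thus "\<pi> x = x" using p permutes_not_in by (cases "x \<in> S") auto
  next
    fix y show "\<exists>!x. \<pi> x = y" using p unfolding permutes_def by blast
  qed
qed

lemma det_expand:
  fixes P :: "'a::comm_ring_1 mat"
  assumes P: "P \<in> carrier_mat n n" and T: "T \<subseteq> {..<n}"
  shows "det (mat n n (\<lambda>(a,b). (if a = b \<and> a \<in> T then [:0,1:] else 0) + [:P $$ (a,b):]))
       = (\<Sum>S\<in>Pow T. monom (pdet P ({..<n} - S)) (card S))"
proof -
  define M where "M = mat n n (\<lambda>(a,b). (if a = b \<and> a \<in> T then [:0,1:] else 0) + [:P $$ (a,b):])"
  define u where "u = (\<lambda>\<pi> a. if \<pi> a = a \<and> a \<in> T then [:0,1:] else (0::'a poly))"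
  define v where "v = (\<lambda>\<pi> a. [:P $$ (a, \<pi> a):])"
  define Pm where "Pm = {\<pi>. \<pi> permutes {0..<n}}"
  have M: "M \<in> carrier_mat n n" unfolding M_def by simp
  have fin: "finite Pm" unfolding Pm_def by (simp add: finite_permutations)
  have "det M = (\<Sum>\<pi>\<in>Pm. signof \<pi> * (\<Prod>a\<in>{0..<n}. u \<pi> a + v \<pi> a))"
    unfolding det_def'[OF M] Pm_def
    by (intro sum.cong refl arg_cong2[where f="(*)"] prod.cong)
       (auto simp: M_def u_def v_def permutes_in_image)
  also have "\<dots> = (\<Sum>\<pi>\<in>Pm. \<Sum>S\<in>Pow {0..<n}. signof \<pi> * ((\<Prod>a\<in>S. u \<pi> a) * (\<Prod>a\<in>{0..<n}-S. v \<pi> a)))"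
    by (simp add: prod_add sum_distrib_left)
  also have "\<dots> = (\<Sum>S\<in>Pow {0..<n}. \<Sum>\<pi>\<in>Pm. signof \<pi> * ((\<Prod>a\<in>S. u \<pi> a) * (\<Prod>a\<in>{0..<n}-S. v \<pi> a)))"
    by (rule sum.swap)
  also have "\<dots> = (\<Sum>S\<in>Pow {0..<n}. if S \<subseteq> T then monom (pdet P ({..<n} - S)) (card S) else 0)"
  proof (rule sum.cong[OF refl])
    fix S assume S: "S \<in> Pow {0..<n}"
    have finS: "finite S" using S finite_subset by auto
    show "(\<Sum>\<pi>\<in>Pm. signof \<pi> * ((\<Prod>a\<in>S. u \<pi> a) * (\<Prod>a\<in>{0..<n}-S. v \<pi> a))) =
          (if S \<subseteq> T then monom (pdet P ({..<n} - S)) (card S) else 0)"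
    proof (cases "S \<subseteq> T")
      case False
      then obtain b where b: "b \<in> S" "b \<notin> T" by auto
      have "(\<Prod>a\<in>S. u \<pi> a) = 0" for \<pi>
        using finS b by (intro prod_zero) (auto simp: u_def intro!: bexI[of _ b])
      thus ?thesis using False by simp
    next
      case True
      have pu: "(\<Prod>a\<in>S. u \<pi> a) = (if \<forall>a\<in>S. \<pi> a = a then monom 1 (card S) else 0)" for \<pi>
      proof (cases "\<forall>a\<in>S. \<pi> a = a")
        case True2: True
        have "(\<Prod>a\<in>S. u \<pi> a) = (\<Prod>a\<in>S. [:0,1:])"
          using True True2 by (intro prod.cong refl) (auto simp: u_def)
        thus ?thesis using True2 by (simp add: monom_altdef)
      next
        case False
        then obtain b where "b \<in> S" "\<pi> b \<noteq> b" by auto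
        hence "(\<Prod>a\<in>S. u \<pi> a) = 0"
          using finS by (intro prod_zero) (auto simp: u_def intro!: bexI[of _ b])
        thus ?thesis using False by simp
      qed
      have Sn: "S \<subseteq> {0..<n}" using S by auto
      have eqset: "{\<pi> \<in> Pm. \<forall>a\<in>S. \<pi> a = a} = {\<pi>. \<pi> permutes ({..<n} - S)}"
        unfolding Pm_def using permutes_minus_iff[OF Sn] by (auto simp: atLeast0LessThan)
      have "(\<Sum>\<pi>\<in>Pm. signof \<pi> * ((\<Prod>a\<in>S. u \<pi> a) * (\<Prod>a\<in>{0..<n}-S. v \<pi> a)))
          = (\<Sum>\<pi>\<in>Pm. if \<forall>a\<in>S. \<pi> a = a then monom (signof \<pi> * (\<Prod>a\<in>{..<n}-S. P $$ (a, \<pi> a))) (card S) else 0)"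
      proof (rule sum.cong[OF refl])
        fix \<pi>
        have "(\<Prod>a\<in>{0..<n}-S. v \<pi> a) = [:\<Prod>a\<in>{..<n}-S. P $$ (a, \<pi> a):]"
          unfolding v_def const_poly_prod by (simp add: atLeast0LessThan)
        thus "signof \<pi> * ((\<Prod>a\<in>S. u \<pi> a) * (\<Prod>a\<in>{0..<n}-S. v \<pi> a)) =
           (if \<forall>a\<in>S. \<pi> a = a then monom (signof \<pi> * (\<Prod>a\<in>{..<n}-S. P $$ (a, \<pi> a))) (card S) else 0)"
          unfolding pu by (simp add: of_int_poly monom_0[symmetric] mult_monom del: monom_0 of_int_mult)
      qed
      also have "\<dots> = (\<Sum>\<pi>\<in>{\<pi> \<in> Pm. \<forall>a\<in>S. \<pi> a = a}. monom (signof \<pi> * (\<Prod>a\<in>{..<n}-S. P $$ (a, \<pi> a))) (card S))"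
        by (simp add: sum.inter_filter[OF fin])
      also have "\<dots> = monom (pdet P ({..<n} - S)) (card S)"
        unfolding eqset pdet_def by (simp add: monom_sum)
      finally show ?thesis using True by simp
    qed
  qed
  also have "\<dots> = (\<Sum>S\<in>Pow T. monom (pdet P ({..<n} - S)) (card S))"
  proof -
    have "Pow T \<subseteq> Pow {0..<n}" using T by (auto simp: atLeast0LessThan)
    hence eq: "{S \<in> Pow {0..<n}. S \<subseteq> T} = Pow T" by auto
    show ?thesis by (subst sum.inter_filter[symmetric]) (simp_all only: eq finite_Pow_iff finite_atLeastLessThan)
  qed
  finally show ?thesis unfolding M_def .
qed

definition Mx :: "nat \<Rightarrow> 'a::comm_ring_1 mat \<Rightarrow> 'a poly mat" where
  "Mx n C = mat n n (\<lambda>(a,b). (if a = b then [:0,1:] else 0) + [:C $$ (a,b):])"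

definition Qc :: "nat \<Rightarrow> 'a::comm_ring_1 mat \<Rightarrow> nat \<Rightarrow> 'a mat" where
  "Qc n C m = mat n n (\<lambda>(a,b). coeff (adj_mat (Mx n C) $$ (a,b)) m)"

lemma Mx_carrier[simp]: "Mx n C \<in> carrier_mat n n" unfolding Mx_def by simp
lemma Qc_carrier[simp]: "Qc n C m \<in> carrier_mat n n" unfolding Qc_def by simp
lemma dim_Mx[simp]: "dim_row (Mx n C) = n" "dim_col (Mx n C) = n" unfolding Mx_def by simp_all
lemma dim_Qc[simp]: "dim_row (Qc n C m) = n" "dim_col (Qc n C m) = n" unfolding Qc_def by simp_all

lemma coeff_X_mult: "coeff ([:0,1:] * (q::'a::comm_ring_1 poly)) m = (if m = 0 then 0 else coeff q (m - 1))"
  by (cases m) (simp_all add: mult_pCons_left)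

lemma coeff_mult_X: "coeff ((q::'a::comm_ring_1 poly) * [:0,1:]) m = (if m = 0 then 0 else coeff q (m - 1))"
  using coeff_X_mult[of q m] by (simp add: mult.commute)

lemma coeff_Mx_left:
  fixes C :: "'a::comm_ring_1 mat"
  assumes C: "C \<in> carrier_mat n n" and Q: "Q \<in> carrier_mat n n" and a: "a < n" and b: "b < n"
  shows "coeff ((Mx n C * Q) $$ (a,b)) m
       = (if m = 0 then 0 else coeff (Q $$ (a,b)) (m - 1)) + (\<Sum>l<n. C $$ (a,l) * coeff (Q $$ (l,b)) m)"
proof -
  have "(Mx n C * Q) $$ (a,b) = (\<Sum>l\<in>{0..<n}. Mx n C $$ (a,l) * Q $$ (l,b))"
    using Q a b by (simp add: scalar_prod_def)
  also have "\<dots> = (\<Sum>l\<in>{0..<n}. (if a = l then [:0,1:] * Q $$ (l,b) else 0) + Polynomial.smult (C $$ (a,l)) (Q $$ (l,b)))"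
    using a by (intro sum.cong refl) (auto simp: Mx_def distrib_right)
  also have "\<dots> = [:0,1:] * Q $$ (a,b) + (\<Sum>l\<in>{0..<n}. Polynomial.smult (C $$ (a,l)) (Q $$ (l,b)))"
    using a by (simp add: sum.distrib)
  finally show ?thesis by (cases m) (simp_all add: coeff_X_mult coeff_sum atLeast0LessThan)
qed

lemma coeff_Mx_right:
  fixes C :: "'a::comm_ring_1 mat"
  assumes C: "C \<in> carrier_mat n n" and Q: "Q \<in> carrier_mat n n" and a: "a < n" and b: "b < n"
  shows "coeff ((Q * Mx n C) $$ (a,b)) m
       = (if m = 0 then 0 else coeff (Q $$ (a,b)) (m - 1)) + (\<Sum>l<n. coeff (Q $$ (a,l)) m * C $$ (l,b))"
proof -
  have "(Q * Mx n C) $$ (a,b) = (\<Sum>l\<in>{0..<n}. Q $$ (a,l) * Mx n C $$ (l,b))"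
    using Q a b by (simp add: scalar_prod_def)
  also have "\<dots> = (\<Sum>l\<in>{0..<n}. (if l = b then Q $$ (a,l) * [:0,1:] else 0) + Polynomial.smult (C $$ (l,b)) (Q $$ (a,l)))"
    using b by (intro sum.cong refl) (auto simp: Mx_def distrib_left mult.commute)
  also have "\<dots> = Q $$ (a,b) * [:0,1:] + (\<Sum>l\<in>{0..<n}. Polynomial.smult (C $$ (l,b)) (Q $$ (a,l)))"
    using b by (simp add: sum.distrib)
  finally show ?thesis by (cases m) (simp_all add: coeff_mult_X coeff_sum atLeast0LessThan mult.commute)
qed

lemma Qc_rel_left:
  fixes C :: "'a::comm_ring_1 mat"
  assumes C: "C \<in> carrier_mat n n"
  shows "C * Qc n C m + (if m = 0 then 0\<^sub>m n n else Qc n C (m - 1)) = coeff (det (Mx n C)) m \<cdot>\<^sub>m 1\<^sub>m n"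
proof (rule eq_matI)
  fix a b assume a: "a < dim_row (coeff (det (Mx n C)) m \<cdot>\<^sub>m 1\<^sub>m n)" and b: "b < dim_col (coeff (det (Mx n C)) m \<cdot>\<^sub>m 1\<^sub>m n)"
  hence a: "a < n" and b: "b < n" by auto
  have adj: "Mx n C * adj_mat (Mx n C) = det (Mx n C) \<cdot>\<^sub>m 1\<^sub>m n" using adj_mat[OF Mx_carrier[of n C]] by simp
  have "coeff ((Mx n C * adj_mat (Mx n C)) $$ (a,b)) m = (if a = b then coeff (det (Mx n C)) m else 0)"
    unfolding adj using a b by simp
  moreover have "coeff ((Mx n C * adj_mat (Mx n C)) $$ (a,b)) m
       = (if m = 0 then 0 else coeff (adj_mat (Mx n C) $$ (a,b)) (m - 1)) + (\<Sum>l<n. C $$ (a,l) * coeff (adj_mat (Mx n C) $$ (l,b)) m)"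
    by (rule coeff_Mx_left[OF C _ a b]) (simp add: adj_mat(1)[OF Mx_carrier])
  moreover have "(C * Qc n C m) $$ (a,b) = (\<Sum>l<n. C $$ (a,l) * coeff (adj_mat (Mx n C) $$ (l,b)) m)"
    using C a b by (simp add: scalar_prod_def Qc_def atLeast0LessThan)
  moreover have "(C * Qc n C m + (if m = 0 then 0\<^sub>m n n else Qc n C (m - 1))) $$ (a, b)
     = (C * Qc n C m) $$ (a,b) + (if m = 0 then 0 else coeff (adj_mat (Mx n C) $$ (a,b)) (m - 1))"
    using C a b by (auto simp: Qc_def)
  moreover have "(coeff (det (Mx n C)) m \<cdot>\<^sub>m 1\<^sub>m n) $$ (a, b) = (if a = b then coeff (det (Mx n C)) m else 0)"
    using a b by simp
  ultimately show "(C * Qc n C m + (if m = 0 then 0\<^sub>m n n else Qc n C (m - 1))) $$ (a, b) = (coeff (det (Mx n C)) m \<cdot>\<^sub>m 1\<^sub>m n) $$ (a, b)"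
    by (simp add: add.commute)
qed (use C in auto)

lemma Qc_rel_right:
  fixes C :: "'a::comm_ring_1 mat"
  assumes C: "C \<in> carrier_mat n n"
  shows "Qc n C m * C + (if m = 0 then 0\<^sub>m n n else Qc n C (m - 1)) = coeff (det (Mx n C)) m \<cdot>\<^sub>m 1\<^sub>m n"
proof (rule eq_matI)
  fix a b assume a: "a < dim_row (coeff (det (Mx n C)) m \<cdot>\<^sub>m 1\<^sub>m n)" and b: "b < dim_col (coeff (det (Mx n C)) m \<cdot>\<^sub>m 1\<^sub>m n)"
  hence a: "a < n" and b: "b < n" by auto
  have adj: "adj_mat (Mx n C) * Mx n C = det (Mx n C) \<cdot>\<^sub>m 1\<^sub>m n" using adj_mat[OF Mx_carrier[of n C]] by simp
  have "coeff ((adj_mat (Mx n C) * Mx n C) $$ (a,b)) m = (if a = b then coeff (det (Mx n C)) m else 0)"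
    unfolding adj using a b by simp
  moreover have "coeff ((adj_mat (Mx n C) * Mx n C) $$ (a,b)) m
       = (if m = 0 then 0 else coeff (adj_mat (Mx n C) $$ (a,b)) (m - 1)) + (\<Sum>l<n. coeff (adj_mat (Mx n C) $$ (a,l)) m * C $$ (l,b))"
    by (rule coeff_Mx_right[OF C _ a b]) (simp add: adj_mat(1)[OF Mx_carrier])
  moreover have "(Qc n C m * C) $$ (a,b) = (\<Sum>l<n. coeff (adj_mat (Mx n C) $$ (a,l)) m * C $$ (l,b))"
    using C a b by (simp add: scalar_prod_def Qc_def atLeast0LessThan)
  moreover have "(Qc n C m * C + (if m = 0 then 0\<^sub>m n n else Qc n C (m - 1))) $$ (a, b)
     = (Qc n C m * C) $$ (a,b) + (if m = 0 then 0 else coeff (adj_mat (Mx n C) $$ (a,b)) (m - 1))"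
    using C a b by (auto simp: Qc_def)
  moreover have "(coeff (det (Mx n C)) m \<cdot>\<^sub>m 1\<^sub>m n) $$ (a, b) = (if a = b then coeff (det (Mx n C)) m else 0)"
    using a b by simp
  ultimately show "(Qc n C m * C + (if m = 0 then 0\<^sub>m n n else Qc n C (m - 1))) $$ (a, b) = (coeff (det (Mx n C)) m \<cdot>\<^sub>m 1\<^sub>m n) $$ (a, b)"
    by (simp add: add.commute)
qed (use C in auto)

lemma Qc_comm:
  fixes C :: "'a::comm_ring_1 mat"
  assumes C: "C \<in> carrier_mat n n"
  shows "C * Qc n C m = Qc n C m * C"
proof (rule eq_matI)
  fix a b assume "a < dim_row (Qc n C m * C)" "b < dim_col (Qc n C m * C)"
  hence a: "a < n" and b: "b < n" using C by auto
  have "(C * Qc n C m + (if m = 0 then 0\<^sub>m n n else Qc n C (m - 1))) $$ (a,b)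
      = (Qc n C m * C + (if m = 0 then 0\<^sub>m n n else Qc n C (m - 1))) $$ (a,b)"
    using Qc_rel_left[OF C, of m] Qc_rel_right[OF C, of m] by simp
  thus "(C * Qc n C m) $$ (a, b) = (Qc n C m * C) $$ (a, b)"
    using a b C by (cases "m = 0") auto
qed (use C in auto)

lemma idx_step:
  fixes C G X :: "'a::comm_ring_1 mat"
  assumes C: "C \<in> carrier_mat n n" and G: "G \<in> carrier_mat n n" and X: "X \<in> carrier_mat n n"
    and CGC: "C * G * C = C" and comm: "G * C = C * G"
    and z: "C * (C * X) = 0\<^sub>m n n"
  shows "C * X = 0\<^sub>m n n"
proof -
  have "C * X = (C * G * C) * X" using CGC by simp
  also have "C * G * C = G * C * C" using comm by simp
  also have "(G * C * C) * X = G * (C * (C * X))" using C G X by (simp add: assoc_mult_mat[of _ n n _ n _ n])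
  also have "\<dots> = 0\<^sub>m n n" using z G by simp
  finally show ?thesis .
qed

lemma idx_pow:
  fixes C G X :: "'a::comm_ring_1 mat"
  assumes C: "C \<in> carrier_mat n n" and G: "G \<in> carrier_mat n n" and X: "X \<in> carrier_mat n n"
    and CGC: "C * G * C = C" and comm: "G * C = C * G"
    and z: "C ^\<^sub>m Suc m * X = 0\<^sub>m n n"
  shows "C * X = 0\<^sub>m n n"
  using X z
proof (induction m arbitrary: X)
  case 0
  thus ?case using C by simp
next
  case (Suc m)
  have CX: "C * X \<in> carrier_mat n n" using C Suc.prems by simp
  have "C ^\<^sub>m Suc m * (C * X) = C ^\<^sub>m Suc (Suc m) * X"
    using C Suc.prems by (simp add: assoc_mult_mat[of _ n n _ n _ n])
  hence "C ^\<^sub>m Suc m * (C * X) = 0\<^sub>m n n" using Suc.prems by simp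
  from Suc.IH[OF CX this] have "C * (C * X) = 0\<^sub>m n n" .
  thus ?case by (rule idx_step[OF C G Suc.prems(1) CGC comm])
qed

lemma mat_add_eq_zero:
  fixes A B :: "'a::ab_group_add mat"
  assumes "A \<in> carrier_mat n n" "B \<in> carrier_mat n n" "A + B = 0\<^sub>m n n"
  shows "A = - B"
proof (rule eq_matI)
  fix i j assume ij: "i < dim_row (- B)" "j < dim_col (- B)"
  have "(A + B) $$ (i,j) = 0" using arg_cong[OF assms(3), of "\<lambda>M. M $$ (i,j)"] ij assms(2) by simp
  moreover have "(A + B) $$ (i,j) = A $$ (i,j) + B $$ (i,j)" using assms(1,2) ij by simp
  ultimately have "A $$ (i,j) + B $$ (i,j) = 0" by simp
  thus "A $$ (i,j) = (- B) $$ (i,j)" using assms ij by (simp add: eq_neg_iff_add_eq_0)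
qed (use assms in auto)

lemma zero_smult_one[simp]: "(0::'a::comm_ring_1) \<cdot>\<^sub>m 1\<^sub>m n = 0\<^sub>m n n"
  by (rule eq_matI) auto

lemma uminus_zero_mat'[simp]: "- (0\<^sub>m n m :: 'a::ab_group_add mat) = 0\<^sub>m n m"
  by (rule eq_matI) auto

lemma smult_one_mult_vec[simp]:
  "(y::'a::comm_ring_1 vec) \<in> carrier_vec n \<Longrightarrow> (k \<cdot>\<^sub>m 1\<^sub>m n) *\<^sub>v y = k \<cdot>\<^sub>v y"
proof -
  assume y: "y \<in> carrier_vec n"
  show "(k \<cdot>\<^sub>m 1\<^sub>m n) *\<^sub>v y = k \<cdot>\<^sub>v y"
  proof (rule eq_vecI)
    fix i assume i: "i < dim_vec (k \<cdot>\<^sub>v y)"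
    hence i: "i < n" using y by simp
    have "((k \<cdot>\<^sub>m 1\<^sub>m n) *\<^sub>v y) $ i = (\<Sum>j\<in>{0..<n}. k * (if j = i then 1 else 0) * y $ j)"
      using i y by (simp add: scalar_prod_def)
    also have "\<dots> = (\<Sum>j\<in>{0..<n}. (if i = j then k * y $ j else 0))"
      by (intro sum.cong) auto
    also have "\<dots> = k * y $ i" using i by (simp add: sum.delta)
    finally show "((k \<cdot>\<^sub>m 1\<^sub>m n) *\<^sub>v y) $ i = (k \<cdot>\<^sub>v y) $ i" using i y by simp
  qed (use y in simp)
qed

lemma zero_mat_mult_vec'[simp]: "(w::'a::comm_ring_1 vec) \<in> carrier_vec n \<Longrightarrow> 0\<^sub>m m n *\<^sub>v w = 0\<^sub>v m"
  by (rule eq_vecI) (auto simp: scalar_prod_def)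

lemma chain:
  fixes C :: "'a::comm_ring_1 mat"
  assumes C: "C \<in> carrier_mat n n"
    and s: "\<forall>j<s. coeff (det (Mx n C)) j = 0" and m: "m < s"
  shows "C ^\<^sub>m Suc m * Qc n C m = 0\<^sub>m n n"
  using m
proof (induction m)
  case 0
  have "C * Qc n C 0 + 0\<^sub>m n n = 0 \<cdot>\<^sub>m 1\<^sub>m n" using Qc_rel_left[OF C, of 0] s 0 by simp
  thus ?case using C by simp
next
  case (Suc m)
  have "C * Qc n C (Suc m) + Qc n C m = 0 \<cdot>\<^sub>m 1\<^sub>m n" using Qc_rel_left[OF C, of "Suc m"] s Suc.prems by simp
  hence "C * Qc n C (Suc m) + Qc n C m = 0\<^sub>m n n" by simp
  hence e: "C * Qc n C (Suc m) = - Qc n C m" using C by (intro mat_add_eq_zero) auto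
  have "C ^\<^sub>m Suc (Suc m) * Qc n C (Suc m) = C ^\<^sub>m Suc m * (C * Qc n C (Suc m))"
    using C by (simp add: assoc_mult_mat[of _ n n _ n _ n])
  also have "\<dots> = - (C ^\<^sub>m Suc m * Qc n C m)" unfolding e using C
    by (simp add: mult_minus_distrib_mat[of _ n n _ n])
  also have "\<dots> = 0\<^sub>m n n" using Suc by simp
  finally show ?case .
qed

lemma key_vec:
  fixes C G :: "'a::comm_ring_1 mat"
  assumes C: "C \<in> carrier_mat n n" and G: "G \<in> carrier_mat n n"
    and CGC: "C * G * C = C" and comm: "G * C = C * G"
    and s: "\<forall>j<s. coeff (det (Mx n C)) j = 0" and w: "w \<in> carrier_vec n"
  shows "Qc n C s *\<^sub>v (C *\<^sub>v (C *\<^sub>v w)) = coeff (det (Mx n C)) s \<cdot>\<^sub>v (C *\<^sub>v w)"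
proof -
  let ?d = "coeff (det (Mx n C)) s"
  define y where "y = C *\<^sub>v w"
  have y: "y \<in> carrier_vec n" using C w unfolding y_def by simp
  have "Qc n C s *\<^sub>v (C *\<^sub>v y) = (Qc n C s * C) *\<^sub>v y" using assoc_mult_mat_vec[OF Qc_carrier C y] by simp
  also have "Qc n C s * C = C * Qc n C s" using Qc_comm[OF C] by simp
  finally have e1: "Qc n C s *\<^sub>v (C *\<^sub>v y) = (C * Qc n C s) *\<^sub>v y" .
  have "Qc n C s *\<^sub>v (C *\<^sub>v y) = ?d \<cdot>\<^sub>v y"
  proof (cases s)
    case 0
    have "C * Qc n C 0 + 0\<^sub>m n n = ?d \<cdot>\<^sub>m 1\<^sub>m n" using Qc_rel_left[OF C, of 0] 0 by simp
    hence "C * Qc n C 0 = ?d \<cdot>\<^sub>m 1\<^sub>m n" using C by simp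
    thus ?thesis using e1 0 y by simp
  next
    case (Suc t)
    have "C ^\<^sub>m Suc t * Qc n C t = 0\<^sub>m n n" using chain[OF C s] Suc by simp
    hence Ct: "C * Qc n C t = 0\<^sub>m n n" by (rule idx_pow[OF C G Qc_carrier CGC comm])
    have Qt: "Qc n C t * C = 0\<^sub>m n n" using Ct Qc_comm[OF C, of t] by simp
    have "C * Qc n C s + Qc n C t = ?d \<cdot>\<^sub>m 1\<^sub>m n" using Qc_rel_left[OF C, of s] Suc by simp
    hence "(C * Qc n C s + Qc n C t) *\<^sub>v y = (?d \<cdot>\<^sub>m 1\<^sub>m n) *\<^sub>v y" by simp
    hence "(C * Qc n C s) *\<^sub>v y + Qc n C t *\<^sub>v y = ?d \<cdot>\<^sub>v y"
      using C y by (simp add: add_mult_distrib_mat_vec[of _ n n])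
    moreover have "Qc n C t *\<^sub>v y = 0\<^sub>v n"
    proof -
      have "Qc n C t *\<^sub>v y = (Qc n C t * C) *\<^sub>v w" unfolding y_def using assoc_mult_mat_vec[OF Qc_carrier C w] by simp
      also have "\<dots> = 0\<^sub>v n" unfolding Qt using w by simp
      finally show ?thesis .
    qed
    moreover have "(C * Qc n C s) *\<^sub>v y \<in> carrier_vec n" by (rule mult_mat_vec_carrier[OF mult_carrier_mat[OF C Qc_carrier] y])
    ultimately have "(C * Qc n C s) *\<^sub>v y = ?d \<cdot>\<^sub>v y" by (metis right_zero_vec)
    thus ?thesis using e1 by simp
  qed
  thus ?thesis unfolding y_def .
qed

lemma det_replace_col_adj:
  fixes M :: "'a::comm_ring_1 mat"
  assumes A: "M \<in> carrier_mat n n" and b: "b \<in> carrier_vec n" and k: "k < n"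
  shows "det (replace_col M b k) = (adj_mat M *\<^sub>v b) $ k"
proof -
  have Ab: "replace_col M b k \<in> carrier_mat n n" using A by (auto simp: replace_col_def)
  have "(adj_mat M *\<^sub>v b) $ k = row (adj_mat M) k \<bullet> b" using adj_mat[OF A] b k by auto
  also have "\<dots> = det (replace_col M b k)" unfolding scalar_prod_def using b k A
    by (subst laplace_expansion_column[OF Ab k], auto intro!: sum.cong arg_cong[of _ _ det]
      arg_cong[of _ _ "\<lambda> x. _ * x"] eq_matI
      simp: replace_col_def adj_mat_def Matrix.row_def cofactor_def mat_delete_def ac_simps)
  finally show ?thesis by simp
qed

lemma coeff_monom_sum:
  "finite A \<Longrightarrow> coeff (\<Sum>S\<in>A. monom (f S) (g S)) s = (\<Sum>S\<in>{S\<in>A. g S = s}. f S)"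
  by (simp add: coeff_sum sum.inter_filter[symmetric] if_distrib cong: if_cong)

lemma reindex_compl:
  assumes T: "T \<subseteq> {..<n}" and s: "s \<le> n"
  shows "(\<Sum>S\<in>{S\<in>Pow T. card S = s}. g ({..<n} - S))
       = (\<Sum>\<beta>\<in>{\<beta>. \<beta> \<subseteq> {..<n} \<and> card \<beta> = n - s \<and> {..<n} - T \<subseteq> \<beta>}. g \<beta>)"
proof (rule sum.reindex_bij_witness[where i = "\<lambda>\<beta>. {..<n} - \<beta>" and j = "\<lambda>S. {..<n} - S"])
  fix S assume S: "S \<in> {S\<in>Pow T. card S = s}"
  hence Sn: "S \<subseteq> {..<n}" using T by auto
  show "{..<n} - ({..<n} - S) = S" using Sn by auto
  have "card ({..<n} - S) = n - s" using S Sn by (simp add: card_Diff_subset finite_subset)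
  thus "{..<n} - S \<in> {\<beta>. \<beta> \<subseteq> {..<n} \<and> card \<beta> = n - s \<and> {..<n} - T \<subseteq> \<beta>}" using S by auto
  show "g ({..<n} - S) = g ({..<n} - S)" ..
next
  fix \<beta> assume b: "\<beta> \<in> {\<beta>. \<beta> \<subseteq> {..<n} \<and> card \<beta> = n - s \<and> {..<n} - T \<subseteq> \<beta>}"
  show "{..<n} - ({..<n} - \<beta>) = \<beta>" using b by auto
  have fb: "finite \<beta>" using b finite_subset by blast
  have "card ({..<n} - \<beta>) = card {..<n} - card \<beta>" using b by (intro card_Diff_subset[OF fb]) auto
  hence "card ({..<n} - \<beta>) = s" using b s by simp
  thus "{..<n} - \<beta> \<in> {S\<in>Pow T. card S = s}" using b by auto
qed

lemma Delta_coeff: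
  fixes C :: "'a::comm_ring_1 mat"
  assumes C: "C \<in> carrier_mat n n" and s: "s \<le> n"
  shows "coeff (det (Mx n C)) s = (\<Sum>\<beta>\<in>Jrn (n - s) n. det (principal_sub C \<beta>))"
proof -
  have "Mx n C = mat n n (\<lambda>(a,b). (if a = b \<and> a \<in> {..<n} then [:0,1:] else 0) + [:C $$ (a,b):])"
    unfolding Mx_def by (rule eq_matI) auto
  hence "coeff (det (Mx n C)) s = (\<Sum>S\<in>{S\<in>Pow {..<n}. card S = s}. pdet C ({..<n} - S))"
    using det_expand[OF C order.refl] by (simp add: coeff_monom_sum)
  also have "\<dots> = (\<Sum>\<beta>\<in>{\<beta>. \<beta> \<subseteq> {..<n} \<and> card \<beta> = n - s \<and> {..<n} - {..<n} \<subseteq> \<beta>}. pdet C \<beta>)"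
    by (rule reindex_compl[OF order.refl s])
  also have "\<dots> = (\<Sum>\<beta>\<in>Jrn (n - s) n. det (principal_sub C \<beta>))"
    unfolding Jrn_def by (intro sum.cong) (auto simp: det_principal_sub[OF C])
  finally show ?thesis .
qed

lemma N_coeff:
  fixes C :: "'a::comm_ring_1 mat"
  assumes C: "C \<in> carrier_mat n n" and s: "s \<le> n" and y: "y \<in> carrier_vec n" and i: "i < n"
  shows "(Qc n C s *\<^sub>v y) $ i = (\<Sum>\<beta>\<in>{\<beta>\<in>Jrn (n - s) n. i \<in> \<beta>}. det (principal_sub (replace_col C y i) \<beta>))"
proof -
  define y' where "y' = map_vec (\<lambda>x. [:x:]) y"
  have y': "y' \<in> carrier_vec n" using y unfolding y'_def by simp
  have P: "replace_col C y i \<in> carrier_mat n n" using C by (simp add: replace_col_def)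
  have "(Qc n C s *\<^sub>v y) $ i = coeff ((adj_mat (Mx n C) *\<^sub>v y') $ i) s"
    using i y y' adj_mat(1)[OF Mx_carrier[of n C]]
    by (simp add: scalar_prod_def Qc_def y'_def coeff_sum mult.commute)
  also have "(adj_mat (Mx n C) *\<^sub>v y') $ i = det (replace_col (Mx n C) y' i)"
    by (rule det_replace_col_adj[OF Mx_carrier y' i, symmetric])
  also have "replace_col (Mx n C) y' i
     = mat n n (\<lambda>(a,b). (if a = b \<and> a \<in> {..<n} - {i} then [:0,1:] else 0) + [:replace_col C y i $$ (a,b):])"
    using C y by (intro eq_matI) (auto simp: replace_col_def Mx_def y'_def)
  also have "coeff (det \<dots>) s = (\<Sum>S\<in>{S\<in>Pow ({..<n} - {i}). card S = s}. pdet (replace_col C y i) ({..<n} - S))"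
    using det_expand[OF P, of "{..<n} - {i}"] by (simp add: coeff_monom_sum)
  also have "\<dots> = (\<Sum>\<beta>\<in>{\<beta>. \<beta> \<subseteq> {..<n} \<and> card \<beta> = n - s \<and> {..<n} - ({..<n} - {i}) \<subseteq> \<beta>}. pdet (replace_col C y i) \<beta>)"
    by (rule reindex_compl[OF _ s]) auto
  also have "\<dots> = (\<Sum>\<beta>\<in>{\<beta>\<in>Jrn (n - s) n. i \<in> \<beta>}. det (principal_sub (replace_col C y i) \<beta>))"
    unfolding Jrn_def using i by (intro sum.cong) (auto simp: det_principal_sub[OF P])
  finally show ?thesis .
qed

lemma rank_nullity_mat:
  fixes M :: "'a::field mat"
  assumes M: "M \<in> carrier_mat n n"
  shows "vec_space.rank n M + kernel_dim M = n"
proof -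
  interpret V: vec_space "TYPE('a)" n .
  interpret lm: linear_map class_ring "module_vec TYPE('a) n" "module_vec TYPE('a) n" "\<lambda>v. M *\<^sub>v v"
  proof (rule linear_map.intro)
    show "vectorspace class_ring (module_vec TYPE('a) n)" by (rule V.vectorspace_axioms)
    show "vectorspace class_ring (module_vec TYPE('a) n)" by (rule V.vectorspace_axioms)
    show "mod_hom class_ring (module_vec TYPE('a) n) (module_vec TYPE('a) n) (\<lambda>v. M *\<^sub>v v)"
    proof (rule mod_hom.intro)
      show "Module.module class_ring (module_vec TYPE('a) n)" by (rule V.module_axioms)
      show "Module.module class_ring (module_vec TYPE('a) n)" by (rule V.module_axioms)
      show "mod_hom_axioms class_ring (module_vec TYPE('a) n) (module_vec TYPE('a) n) (\<lambda>v. M *\<^sub>v v)"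
        unfolding mod_hom_axioms_def LinearCombinations.module_hom_def using M
        by (auto simp: mult_add_distrib_mat_vec mult_mat_vec)
    qed
  qed
  have rn: "vectorspace.dim class_ring (V.vs lm.imT) + vectorspace.dim class_ring (V.vs lm.kerT) = V.dim"
    using lm.rank_nullity_main(1) V.fin_dim by simp
  have im: "lm.imT = V.span (set (cols M))"
    using V.col_space_eq[OF M] M unfolding lm.im_def V.col_space_def by auto
  have ker: "lm.kerT = mat_kernel M"
    using M unfolding lm.ker_def mat_kernel_def by auto
  have "V.rank M = vectorspace.dim class_ring (V.vs lm.imT)" unfolding V.rank_def im ..
  moreover have "kernel_dim M = vectorspace.dim class_ring (V.vs lm.kerT)"
    unfolding kernel_dim_def ker using M by simp
  ultimately show ?thesis using rn V.dim_is_n by simp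
qed

lemma neg_pow_mult_vec:
  fixes C :: "'a::field mat"
  assumes C: "C \<in> carrier_mat n n" and v: "v \<in> carrier_vec n"
  shows "(- C) ^\<^sub>m k *\<^sub>v v = (-1) ^ k \<cdot>\<^sub>v (C ^\<^sub>m k *\<^sub>v v)"
  using v
proof (induction k arbitrary: v)
  case 0
  thus ?case using C by simp
next
  case (Suc k)
  have nC: "- C \<in> carrier_mat n n" using C by simp
  have Cv: "C *\<^sub>v v \<in> carrier_vec n" using C Suc.prems by simp
  have "(- C) ^\<^sub>m Suc k *\<^sub>v v = (- C) ^\<^sub>m k *\<^sub>v ((- C) *\<^sub>v v)"
    using assoc_mult_mat_vec[OF pow_carrier_mat[OF nC] nC Suc.prems] by simp
  also have "(- C) *\<^sub>v v = (-1) \<cdot>\<^sub>v (C *\<^sub>v v)"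
    using C Suc.prems by (intro eq_vecI) (auto simp: scalar_prod_def sum_negf)
  also have "(- C) ^\<^sub>m k *\<^sub>v ((-1) \<cdot>\<^sub>v (C *\<^sub>v v)) = (-1) \<cdot>\<^sub>v ((- C) ^\<^sub>m k *\<^sub>v (C *\<^sub>v v))"
    using mult_mat_vec[of "(- C) ^\<^sub>m k" n n "C *\<^sub>v v" "-1"] pow_carrier_mat[OF nC, of k] Cv by simp
  also have "(- C) ^\<^sub>m k *\<^sub>v (C *\<^sub>v v) = (-1) ^ k \<cdot>\<^sub>v (C ^\<^sub>m k *\<^sub>v (C *\<^sub>v v))"
    by (rule Suc.IH[OF Cv])
  also have "C ^\<^sub>m k *\<^sub>v (C *\<^sub>v v) = C ^\<^sub>m Suc k *\<^sub>v v"
    using assoc_mult_mat_vec[OF pow_carrier_mat[OF C] C Suc.prems] by simp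
  finally show ?case by (simp add: smult_smult_assoc)
qed

lemma mat_mult_zero_vec[simp]: "A \<in> carrier_mat nr nc \<Longrightarrow> A *\<^sub>v 0\<^sub>v nc = (0\<^sub>v nr :: 'a::comm_ring_1 vec)"
  by (intro eq_vecI) (auto simp: scalar_prod_def)

lemma smult_zero_vec'[simp]: "k \<cdot>\<^sub>v 0\<^sub>v n = (0\<^sub>v n :: 'a::comm_ring_1 vec)"
  by (intro eq_vecI) auto

lemma idx_vec:
  fixes C G :: "'a::comm_ring_1 mat"
  assumes C: "C \<in> carrier_mat n n" and G: "G \<in> carrier_mat n n"
    and CGC: "C * G * C = C" and comm: "G * C = C * G" and v: "v \<in> carrier_vec n"
  shows "C ^\<^sub>m Suc m *\<^sub>v v = 0\<^sub>v n \<longleftrightarrow> C *\<^sub>v v = 0\<^sub>v n"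
proof
  show "C *\<^sub>v v = 0\<^sub>v n \<Longrightarrow> C ^\<^sub>m Suc m *\<^sub>v v = 0\<^sub>v n"
    using assoc_mult_mat_vec[OF pow_carrier_mat[OF C] C v, of m] pow_carrier_mat[OF C, of m] by simp
  show "C ^\<^sub>m Suc m *\<^sub>v v = 0\<^sub>v n \<Longrightarrow> C *\<^sub>v v = 0\<^sub>v n"
    using v
  proof (induction m arbitrary: v)
    case 0
    thus ?case using C by simp
  next
    case (Suc m)
    have Cv: "C *\<^sub>v v \<in> carrier_vec n" using C Suc.prems by simp
    have "C ^\<^sub>m Suc m *\<^sub>v (C *\<^sub>v v) = C ^\<^sub>m Suc (Suc m) *\<^sub>v v"
      using assoc_mult_mat_vec[OF pow_carrier_mat[OF C] C Suc.prems(2), of "Suc m"] by simp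
    hence "C *\<^sub>v (C *\<^sub>v v) = 0\<^sub>v n" using Suc.IH[OF _ Cv] Suc.prems by simp
    have "C *\<^sub>v v = (C * G * C) *\<^sub>v v" using CGC by simp
    also have "C * G * C = G * C * C" using comm by simp
    also have "(G * C * C) *\<^sub>v v = G *\<^sub>v (C *\<^sub>v (C *\<^sub>v v))"
      using G C Suc.prems by (simp add: assoc_mult_mat_vec[of _ n n _ n])
    also have "\<dots> = 0\<^sub>v n" using \<open>C *\<^sub>v (C *\<^sub>v v) = 0\<^sub>v n\<close> G by simp
    finally show ?case .
  qed
qed

lemma kernel_dim_cong:
  assumes "mat_kernel A = mat_kernel B" "dim_col A = dim_col B"
  shows "kernel_dim A = kernel_dim B"
  using assms unfolding kernel_dim_def by simp

lemma order_kernel: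
  fixes C G :: "complex mat"
  assumes C: "C \<in> carrier_mat n n" and G: "G \<in> carrier_mat n n"
    and CGC: "C * G * C = C" and comm: "G * C = C * G" and n: "0 < n"
  shows "order 0 (det (Mx n C)) = kernel_dim C"
proof -
  have nC: "- C \<in> carrier_mat n n" using C by simp
  have "Mx n C = char_poly_matrix (- C)"
    using C unfolding Mx_def char_poly_matrix_def by (intro eq_matI) auto
  hence p: "det (Mx n C) = char_poly (- C)" unfolding char_poly_def by simp
  from char_poly_factorized[OF nC] obtain as where "char_poly (- C) = (\<Prod>a\<leftarrow>as. [:- a, 1:])" by auto
  from jordan_nf_exists[OF nC this] obtain n_as where jnf: "jordan_nf (- C) n_as" by auto
  have "similar_mat (- C) (jordan_matrix n_as)" using jnf unfolding jordan_nf_def by simp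
  then obtain m P Q where "{- C, jordan_matrix n_as, P, Q} \<subseteq> carrier_mat m m" using similar_matD by blast
  hence J: "jordan_matrix n_as \<in> carrier_mat m m" and m1: "- C \<in> carrier_mat m m" by auto
  have "m = n" using m1 nC by (metis carrier_matD(1))
  hence "sum_list (map fst n_as) = n" using J by (metis carrier_matD(1) jordan_matrix_dim(1))
  hence le: "x \<le> n" if "x \<in> set (map fst [(n', e)\<leftarrow>n_as . e = 0])" for x
    using that member_le_sum_list[of x "map fst n_as"] by auto
  have "order 0 (det (Mx n C)) = sum_list (map fst (filter (\<lambda>na. snd na = 0) n_as))"
    unfolding p by (rule jordan_nf_order[OF jnf])
  also have "\<dots> = (\<Sum>x\<leftarrow>map fst [(n', e)\<leftarrow>n_as . e = 0]. min n x)"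
  proof -
    let ?L = "filter (\<lambda>na. snd na = 0) n_as"
    have eqL: "[(n', e)\<leftarrow>n_as . e = 0] = ?L" by (induct n_as) auto
    have "map (min n) (map fst ?L) = map fst ?L"
      using le unfolding eqL by (intro map_idI) (simp add: min_absorb2)
    thus ?thesis unfolding eqL by metis
  qed
  also have "\<dots> = dim_gen_eigenspace (- C) 0 n"
    by (rule dim_gen_eigenspace[OF jnf, symmetric])
  also have "\<dots> = kernel_dim ((- C) ^\<^sub>m n)"
  proof -
    have "char_matrix (- C) 0 = - C" using C unfolding char_matrix_def by (intro eq_matI) auto
    thus ?thesis unfolding dim_gen_eigenspace_def by simp
  qed
  also have "\<dots> = kernel_dim C"
  proof (rule kernel_dim_cong)
    show "dim_col ((- C) ^\<^sub>m n) = dim_col C" using C n by simp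
    obtain m where m: "n = Suc m" using n by (cases n) auto
    show "mat_kernel ((- C) ^\<^sub>m n) = mat_kernel C"
    proof (rule equalityI; rule subsetI)
      fix v assume "v \<in> mat_kernel ((- C) ^\<^sub>m n)"
      hence v: "v \<in> carrier_vec n" and z: "(- C) ^\<^sub>m n *\<^sub>v v = 0\<^sub>v n" using C n unfolding mat_kernel_def by auto
      hence "(-1) ^ n \<cdot>\<^sub>v (C ^\<^sub>m n *\<^sub>v v) = 0\<^sub>v n" using neg_pow_mult_vec[OF C v] by simp
      hence "(-1) ^ n \<cdot>\<^sub>v ((-1) ^ n \<cdot>\<^sub>v (C ^\<^sub>m n *\<^sub>v v)) = 0\<^sub>v n" by simp
      hence "C ^\<^sub>m n *\<^sub>v v = 0\<^sub>v n" using C v by (simp add: smult_smult_assoc power_mult_distrib[symmetric])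
      hence "C *\<^sub>v v = 0\<^sub>v n" using idx_vec[OF C G CGC comm v] m by simp
      thus "v \<in> mat_kernel C" using v C unfolding mat_kernel_def by auto
    next
      fix v assume "v \<in> mat_kernel C"
      hence v: "v \<in> carrier_vec n" and z: "C *\<^sub>v v = 0\<^sub>v n" using C unfolding mat_kernel_def by auto
      hence "C ^\<^sub>m n *\<^sub>v v = 0\<^sub>v n" using idx_vec[OF C G CGC comm v] m by simp
      hence "(- C) ^\<^sub>m n *\<^sub>v v = 0\<^sub>v n" using neg_pow_mult_vec[OF C v] by simp
      thus "v \<in> mat_kernel ((- C) ^\<^sub>m n)" using v C unfolding mat_kernel_def by auto
    qed
  qed
  finally show ?thesis .
qed

lemma pow_comm:
  fixes X Y :: "'a::comm_ring_1 mat"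
  assumes X: "X \<in> carrier_mat n n" and Y: "Y \<in> carrier_mat n n" and c: "X * Y = Y * X"
  shows "X ^\<^sub>m j * Y = Y * X ^\<^sub>m j"
proof (induction j)
  case 0 thus ?case using X Y by simp
next
  case (Suc j)
  have "X ^\<^sub>m Suc j * Y = X ^\<^sub>m j * (X * Y)"
    using X Y by (simp add: assoc_mult_mat[of _ n n _ n _ n])
  also have "\<dots> = (X ^\<^sub>m j * Y) * X" using X Y c by (simp add: assoc_mult_mat[of _ n n _ n _ n])
  also have "\<dots> = Y * X ^\<^sub>m Suc j" using X Y Suc by (simp add: assoc_mult_mat[of _ n n _ n _ n])
  finally show ?case .
qed

lemma pow_mult_comm:
  fixes X Y :: "'a::comm_ring_1 mat"
  assumes X: "X \<in> carrier_mat n n" and Y: "Y \<in> carrier_mat n n" and c: "X * Y = Y * X"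
  shows "(X * Y) ^\<^sub>m j = X ^\<^sub>m j * Y ^\<^sub>m j"
proof (induction j)
  case 0 thus ?case using X Y by simp
next
  case (Suc j)
  have "(X * Y) ^\<^sub>m Suc j = (X ^\<^sub>m j * Y ^\<^sub>m j) * (X * Y)" using Suc by simp
  also have "\<dots> = X ^\<^sub>m j * ((Y ^\<^sub>m j * X) * Y)"
    using X Y by (simp add: assoc_mult_mat[of _ n n _ n _ n])
  also have "Y ^\<^sub>m j * X = X * Y ^\<^sub>m j" using pow_comm[OF Y X c[symmetric]] by simp
  also have "X ^\<^sub>m j * ((X * Y ^\<^sub>m j) * Y) = X ^\<^sub>m Suc j * Y ^\<^sub>m Suc j"
  proof -
    have YY: "Y ^\<^sub>m j * Y \<in> carrier_mat n n" by (rule mult_carrier_mat[OF pow_carrier_mat[OF Y] Y])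
    have "X ^\<^sub>m Suc j * Y ^\<^sub>m Suc j = (X ^\<^sub>m j * X) * (Y ^\<^sub>m j * Y)" by simp
    also have "\<dots> = X ^\<^sub>m j * (X * (Y ^\<^sub>m j * Y))"
      by (rule assoc_mult_mat[OF pow_carrier_mat[OF X] X YY])
    also have "X * (Y ^\<^sub>m j * Y) = (X * Y ^\<^sub>m j) * Y"
      by (rule assoc_mult_mat[OF X pow_carrier_mat[OF Y] Y, symmetric])
    finally show ?thesis by simp
  qed
  finally show ?case .
qed

lemma pow_add_mat:
  fixes X :: "'a::comm_ring_1 mat"
  assumes X: "X \<in> carrier_mat n n"
  shows "X ^\<^sub>m (i + j) = X ^\<^sub>m i * X ^\<^sub>m j"
proof (induction j)
  case 0 thus ?case using X by simp
next
  case (Suc j)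
  thus ?case using X by (simp add: assoc_mult_mat[of _ n n _ n _ n])
qed

lemma idem_pow:
  fixes E :: "'a::comm_ring_1 mat"
  assumes E: "E \<in> carrier_mat n n" and idem: "E * E = E"
  shows "E ^\<^sub>m Suc j = E"
proof (induction j)
  case 0 thus ?case using E by simp
next
  case (Suc j) thus ?case using idem by simp
qed

lemma drazin_facts:
  fixes A AD :: "'a::comm_ring_1 mat"
  assumes A: "A \<in> carrier_mat n n" and AD: "AD \<in> carrier_mat n n"
    and D1: "A ^\<^sub>m (k+1) * AD = A ^\<^sub>m k" and D2: "AD * A * AD = AD" and D3: "A * AD = AD * A"
  shows "A ^\<^sub>m (k+1) * AD ^\<^sub>m (k+1) * A ^\<^sub>m (k+1) = A ^\<^sub>m (k+1)"
    and "AD ^\<^sub>m (k+1) * A ^\<^sub>m (k+1) = A ^\<^sub>m (k+1) * AD ^\<^sub>m (k+1)"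
    and "A ^\<^sub>m (k+1) * (AD ^\<^sub>m (k+1) * AD) = AD"
    and "mat_kernel (A ^\<^sub>m k) = mat_kernel (A ^\<^sub>m (k+1))"
proof -
  define C where "C = A ^\<^sub>m (k+1)"
  define G where "G = AD ^\<^sub>m (k+1)"
  define E where "E = A * AD"
  have C: "C \<in> carrier_mat n n" unfolding C_def by (rule pow_carrier_mat[OF A])
  have G: "G \<in> carrier_mat n n" unfolding G_def by (rule pow_carrier_mat[OF AD])
  have Ec: "E \<in> carrier_mat n n" unfolding E_def using A AD by simp
  have E2: "E = AD * A" unfolding E_def D3 ..
  have EE: "E * E = E"
  proof -
    have "E * E = A * ((AD * A) * AD)" unfolding E_def using A AD by (simp add: assoc_mult_mat[of _ n n _ n _ n])
    also have "\<dots> = E" unfolding D2 E_def ..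
    finally show ?thesis .
  qed
  have AiAD: "A ^\<^sub>m i * AD = AD * A ^\<^sub>m i" for i by (rule pow_comm[OF A AD D3])
  have GC: "G * C = C * G" unfolding G_def C_def
    by (rule pow_comm[OF AD pow_carrier_mat[OF A]], rule AiAD[symmetric])
  have CG: "C * G = E" unfolding C_def G_def E_def
    using pow_mult_comm[OF A AD D3, of "k+1"] idem_pow[OF Ec EE, of k] unfolding E_def by simp
  have "C * G * C = C * (C * G)" using C G GC by (simp add: assoc_mult_mat[of _ n n _ n _ n])
  also have "\<dots> = C * E" unfolding CG ..
  also have "\<dots> = (C * AD) * A" unfolding E2 using C A AD by (simp add: assoc_mult_mat[of _ n n _ n _ n])
  also have "C * AD = A ^\<^sub>m k" unfolding C_def by (rule D1)
  also have "A ^\<^sub>m k * A = C" unfolding C_def by simp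
  finally show "A ^\<^sub>m (k+1) * AD ^\<^sub>m (k+1) * A ^\<^sub>m (k+1) = A ^\<^sub>m (k+1)" unfolding C_def G_def .
  show "AD ^\<^sub>m (k+1) * A ^\<^sub>m (k+1) = A ^\<^sub>m (k+1) * AD ^\<^sub>m (k+1)" using GC unfolding C_def G_def .
  have "C * (G * AD) = E * AD" using C G AD CG by (simp add: assoc_mult_mat[of _ n n _ n _ n, symmetric])
  also have "\<dots> = AD" unfolding E2 by (rule D2)
  finally show "A ^\<^sub>m (k+1) * (AD ^\<^sub>m (k+1) * AD) = AD" unfolding C_def G_def .
  show "mat_kernel (A ^\<^sub>m k) = mat_kernel (A ^\<^sub>m (k+1))"
  proof (rule equalityI; rule subsetI)
    have dk: "dim_col (A ^\<^sub>m k) = n" "dim_row (A ^\<^sub>m k) = n" using pow_carrier_mat[OF A, of k] by (auto dest: carrier_matD)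
    fix v assume "v \<in> mat_kernel (A ^\<^sub>m k)"
    hence v: "v \<in> carrier_vec n" and z: "A ^\<^sub>m k *\<^sub>v v = 0\<^sub>v n" using dk unfolding mat_kernel_def by (auto simp del: pow_mat_dim)
    have "A ^\<^sub>m (k+1) = A * A ^\<^sub>m k" using pow_comm[OF A A refl, of k] by simp
    hence "A ^\<^sub>m (k+1) *\<^sub>v v = A *\<^sub>v (A ^\<^sub>m k *\<^sub>v v)" using A v by (simp add: assoc_mult_mat_vec[of _ n n _ n])
    hence "A ^\<^sub>m (k+1) *\<^sub>v v = 0\<^sub>v n" using z A by simp
    thus "v \<in> mat_kernel (A ^\<^sub>m (k+1))" using v A unfolding mat_kernel_def by auto
  next
    fix v assume "v \<in> mat_kernel (A ^\<^sub>m (k+1))"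
    hence v: "v \<in> carrier_vec n" and z: "A ^\<^sub>m (k+1) *\<^sub>v v = 0\<^sub>v n" using A unfolding mat_kernel_def by auto
    have "A ^\<^sub>m k = AD * A ^\<^sub>m (k+1)" using D1 AiAD[of "k+1"] by simp
    hence "A ^\<^sub>m k *\<^sub>v v = (AD * A ^\<^sub>m (k+1)) *\<^sub>v v" by (rule arg_cong)
    also have "\<dots> = AD *\<^sub>v (A ^\<^sub>m (k+1) *\<^sub>v v)"
      by (rule assoc_mult_mat_vec[OF AD pow_carrier_mat[OF A] v])
    finally have "A ^\<^sub>m k *\<^sub>v v = AD *\<^sub>v (A ^\<^sub>m (k+1) *\<^sub>v v)" .
    hence "A ^\<^sub>m k *\<^sub>v v = 0\<^sub>v n" using z AD by simp
    have dk: "dim_col (A ^\<^sub>m k) = n" "dim_row (A ^\<^sub>m k) = n" using pow_carrier_mat[OF A, of k] by (auto dest: carrier_matD)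
    thus "v \<in> mat_kernel (A ^\<^sub>m k)" using v \<open>A ^\<^sub>m k *\<^sub>v v = 0\<^sub>v n\<close> unfolding mat_kernel_def by (simp del: pow_mat_dim)
  qed
qed

lemma Mx_char_poly: "C \<in> carrier_mat n n \<Longrightarrow> det (Mx n C) = char_poly (- C)"
  unfolding char_poly_def
  by (rule arg_cong[of _ _ det], unfold Mx_def char_poly_matrix_def, intro eq_matI) auto

theorem theorem5p2:
  fixes A B AD :: "complex mat" and n :: nat and t :: real and i j :: nat
  assumes A: "A \<in> carrier_mat n n" and B: "B \<in> carrier_mat n n"
    and AD: "is_drazin_inverse A AD"
    and i: "i < n" and j: "j < n"
  shows "let k = mat_ind A;
             r = mat_rank (A ^\<^sub>m k);
             Bh = (\<lambda>l::nat. A ^\<^sub>m l * B);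
             X = AD * B + mat_sum n (\<lambda>s. (((-1) ^ (s - 1) / fact s) * complex_of_real t ^ s)
                   \<cdot>\<^sub>m (A ^\<^sub>m (s - 1) * B - AD * A ^\<^sub>m s * B)) {1..k};
             \<Delta> = (\<Sum>\<beta>\<in>Jrn r n. det (principal_sub (A ^\<^sub>m (k+1)) \<beta>));
             N = (\<lambda>l::nat. \<Sum>\<beta>\<in>{\<beta>\<in>Jrn r n. i \<in> \<beta>}.
                   det (principal_sub (replace_col (A ^\<^sub>m (k+1)) (col (Bh l) j) i) \<beta>))
         in X $$ (i, j) = N k / \<Delta> +
              (\<Sum>s = 1..k. ((-1) ^ (s - 1) / fact s) * (Bh (s - 1) $$ (i, j) - N (k + s) / \<Delta>)
                           * complex_of_real t ^ s)"
proof -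
  define k where "k = mat_ind A"
  define r where "r = mat_rank (A ^\<^sub>m k)"
  define C where "C = A ^\<^sub>m (k+1)"
  define G where "G = AD ^\<^sub>m (k+1)"
  have ADc: "AD \<in> carrier_mat n n" and D1: "A ^\<^sub>m (k+1) * AD = A ^\<^sub>m k"
    and D2: "AD * A * AD = AD" and D3: "A * AD = AD * A"
    using AD A unfolding is_drazin_inverse_def k_def by auto
  note df = drazin_facts[OF A ADc D1 D2 D3]
  have Cc: "C \<in> carrier_mat n n" unfolding C_def by (rule pow_carrier_mat[OF A])
  have Gc: "G \<in> carrier_mat n n" unfolding G_def by (rule pow_carrier_mat[OF ADc])
  have CGC: "C * G * C = C" using df(1) unfolding C_def G_def .
  have comm: "G * C = C * G" using df(2) unfolding C_def G_def .
  have CGAD: "C * (G * AD) = AD" using df(3) unfolding C_def G_def .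
  have n0: "0 < n" using i by simp
  define s where "s = kernel_dim C"
  have Akc: "A ^\<^sub>m k \<in> carrier_mat n n" by (rule pow_carrier_mat[OF A])
  have rk: "r + s = n"
  proof -
    have "r = vec_space.rank n (A ^\<^sub>m k)" unfolding r_def mat_rank_def using Akc by (auto dest: carrier_matD)
    moreover have "kernel_dim (A ^\<^sub>m k) = s" unfolding s_def C_def
      by (rule kernel_dim_cong[OF df(4)]) (use Akc pow_carrier_mat[OF A, of "k+1"] in \<open>auto dest: carrier_matD\<close>)
    ultimately show ?thesis using rank_nullity_mat[OF Akc] by simp
  qed
  hence sn: "s \<le> n" and nsr: "n - s = r" by auto
  define p where "p = det (Mx n C)"
  have ord: "order 0 p = s" using order_kernel[OF Cc Gc CGC comm n0] unfolding p_def s_def .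
  have p0: "p \<noteq> 0"
  proof
    assume "p = 0"
    moreover have "coeff (char_poly (- C)) n = 1" using degree_monic_char_poly[of "- C" n] Cc by simp
    ultimately show False unfolding p_def Mx_char_poly[OF Cc] by simp
  qed
  have low: "\<forall>j<s. coeff p j = 0"
  proof -
    have "monom 1 s dvd p" using monom_1_dvd_iff[OF p0] ord by simp
    thus ?thesis using monom_1_dvd_iff' by blast
  qed
  have dnz: "coeff p s \<noteq> 0"
  proof
    assume "coeff p s = 0"
    hence "\<forall>j<Suc s. coeff p j = 0" using low less_Suc_eq by auto
    hence "monom 1 (Suc s) dvd p" using monom_1_dvd_iff' by blast
    thus False using monom_1_dvd_iff[OF p0] ord by simp
  qed
  have Delta: "(\<Sum>\<beta>\<in>Jrn r n. det (principal_sub (A ^\<^sub>m (k+1)) \<beta>)) = coeff p s"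
    using Delta_coeff[OF Cc sn] unfolding p_def nsr C_def by simp
  have Nval: "(\<Sum>\<beta>\<in>{\<beta>\<in>Jrn r n. i \<in> \<beta>}. det (principal_sub (replace_col (A ^\<^sub>m (k+1)) (col (A ^\<^sub>m (k + q) * B) j) i) \<beta>))
      = coeff p s * (AD * (A ^\<^sub>m q * B)) $$ (i,j)" for q
  proof -
    define z where "z = col (A ^\<^sub>m q * B) j"
    have AtB: "A ^\<^sub>m q * B \<in> carrier_mat n n" by (rule mult_carrier_mat[OF pow_carrier_mat[OF A] B])
    have zc: "z \<in> carrier_vec n" unfolding z_def using AtB j by simp
    define w where "w = (G * AD) *\<^sub>v z"
    have GAD: "G * AD \<in> carrier_mat n n" using Gc ADc by simp
    have wc: "w \<in> carrier_vec n" unfolding w_def using GAD zc by simp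
    have Cw: "C *\<^sub>v w = AD *\<^sub>v z"
      unfolding w_def using assoc_mult_mat_vec[OF Cc GAD zc] CGAD by simp
    have "col (A ^\<^sub>m (k + q) * B) j = col (A ^\<^sub>m k * (A ^\<^sub>m q * B)) j"
      unfolding pow_add_mat[OF A] using Akc pow_carrier_mat[OF A, of q] B
      by (simp add: assoc_mult_mat[of _ n n _ n _ n])
    also have "\<dots> = A ^\<^sub>m k *\<^sub>v z" unfolding z_def by (rule col_mult2[OF Akc AtB j])
    also have "A ^\<^sub>m k = C * AD" unfolding C_def using D1 by simp
    also have "(C * AD) *\<^sub>v z = C *\<^sub>v (AD *\<^sub>v z)" by (rule assoc_mult_mat_vec[OF Cc ADc zc])
    finally have y: "col (A ^\<^sub>m (k + q) * B) j = C *\<^sub>v (C *\<^sub>v w)" unfolding Cw .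
    have yc: "col (A ^\<^sub>m (k + q) * B) j \<in> carrier_vec n" unfolding y using Cc wc by simp
    have "(\<Sum>\<beta>\<in>{\<beta>\<in>Jrn r n. i \<in> \<beta>}. det (principal_sub (replace_col (A ^\<^sub>m (k+1)) (col (A ^\<^sub>m (k + q) * B) j) i) \<beta>))
        = (Qc n C s *\<^sub>v col (A ^\<^sub>m (k + q) * B) j) $ i"
      using N_coeff[OF Cc sn yc i] unfolding nsr C_def by simp
    also have "\<dots> = (coeff p s \<cdot>\<^sub>v (AD *\<^sub>v z)) $ i"
      using key_vec[OF Cc Gc CGC comm low[unfolded p_def] wc] unfolding y Cw[symmetric] p_def by simp
    also have "\<dots> = coeff p s * (AD * (A ^\<^sub>m q * B)) $$ (i,j)"
    proof -
      have "(AD * (A ^\<^sub>m q * B)) $$ (i,j) = row AD i \<bullet> col (A ^\<^sub>m q * B) j"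
        by (rule index_mult_mat(1)) (use i j ADc AtB in auto)
      thus ?thesis unfolding z_def using i j ADc AtB by simp
    qed
    finally show ?thesis .
  qed
  have N0: "(\<Sum>\<beta>\<in>{\<beta>\<in>Jrn r n. i \<in> \<beta>}. det (principal_sub (replace_col (A ^\<^sub>m (k+1)) (col (A ^\<^sub>m k * B) j) i) \<beta>))
      = coeff p s * (AD * B) $$ (i,j)"
    using Nval[of 0] A B by simp
  have lhs: "(AD * B + mat_sum n (\<lambda>s. (((-1) ^ (s - 1) / fact s) * complex_of_real t ^ s)
                   \<cdot>\<^sub>m (A ^\<^sub>m (s - 1) * B - AD * A ^\<^sub>m s * B)) {1..k}) $$ (i, j)
     = (AD * B) $$ (i,j) + (\<Sum>s = 1..k. (((-1) ^ (s - 1) / fact s) * complex_of_real t ^ s)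
                   * ((A ^\<^sub>m (s - 1) * B) $$ (i,j) - (AD * (A ^\<^sub>m s * B)) $$ (i,j)))"
  proof -
    have "(AD * A ^\<^sub>m s * B) = AD * (A ^\<^sub>m s * B)" for s
      using ADc pow_carrier_mat[OF A, of s] B by (simp add: assoc_mult_mat[of _ n n _ n _ n])
    thus ?thesis using i j ADc B A unfolding mat_sum_def by (auto intro!: sum.cong)
  qed
  show ?thesis
    unfolding Let_def k_def[symmetric] r_def[symmetric] lhs Delta N0 Nval
    using dnz by (auto simp: algebra_simps intro!: sum.cong)
qed

end
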